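(* Let $a\in[0,1]$ with $a\neq \frac12$, and define $f_a:[0,1]\to[0,1]$ by $$f_a(x)=\begin{cases}(1-2a)x^2+2ax, & x\in[0,\frac13],\\ x, & x\in(\frac13,1].\end{cases}$$ For $x^{(0)}\in[0,1]$ put $x^{(n)}=f_a^n(x^{(0)})$, where $f_a^n$ denotes the $n$-fold composition of $f_a$ with itself. Then: 1. The set of fixed points of $f_a$ is $\{0\}\cup(\frac13,1]$. 2. If $0\le a<\frac12$, then $\lim_{n\to\infty}x^{(n)}=0$ for every $x^{(0)}\in[0,\frac13]$. 3. If $\frac12<a\le 1$, then for every $x^{(0)}\in(0,\frac13]$ there exist $n\in\mathbb N$ and $p\in(\frac13,\frac19(4a+1)]$ such that $f_a^n(x^{(0)})=p$ and $f_a^{n+1}(x^{(0)})=f_a(p)=p$.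
   Context: This map is the reduction to $[0,1]$ (via $y=1-x$) of the quadratic stochastic operator $x'=x^2+2p(x)xy$, $y'=2(1-p(x))xy+y^2$ on the 1-simplex, with $p(x)=a$ for $x\le\frac13$, $p(x)=b$ for $\frac13<x<\frac23$, $p(x)=c$ for $x\ge\frac23$, in the special case $b=c=\frac12$. *)

theory Defs
  imports "HOL-Analysis.Analysis"
begin

definition f_a :: "real \<Rightarrow> real \<Rightarrow> real" where
  "f_a a x = (if x \<le> 1/3 then (1 - 2*a) * x^2 + 2*a*x else x)"

end

theory Submission
  imports Defs
begin

lemma fa_low: "x \<le> 1/3 \<Longrightarrow> f_a a x = x * ((1-2*a)*x + 2*a)"
  unfolding f_a_def by (simp add: power2_eq_square algebra_simps)

lemma fa_high: "x > 1/3 \<Longrightarrow> f_a a x = x"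
  unfolding f_a_def by simp

lemma part1:
  fixes a :: real
  assumes "a \<noteq> 1/2"
  shows "{x \<in> {0..1}. f_a a x = x} = {0} \<union> {1/3<..1}"
proof (rule set_eqI, rule iffI)
  fix x assume "x \<in> {x \<in> {0..1}. f_a a x = x}"
  hence x: "0 \<le> x" "x \<le> 1" "f_a a x = x" by auto
  show "x \<in> {0} \<union> {1/3<..1}"
  proof (cases "x \<le> 1/3")
    case True
    hence "x * ((1-2*a)*x + 2*a) = x * 1" using x fa_low by simp
    hence "x = 0 \<or> (1-2*a)*x + 2*a = 1" by simp
    moreover have "(1-2*a)*x + 2*a - 1 = (1-2*a)*(x-1)" by (simp add: algebra_simps)
    moreover have "1-2*a \<noteq> 0" using assms by simp
    ultimately show ?thesis using True by auto
  next
    case False thus ?thesis using x by auto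
  qed
next
  fix x :: real assume "x \<in> {0} \<union> {1/3<..1}"
  thus "x \<in> {x \<in> {0..1}. f_a a x = x}" by (auto simp: f_a_def)
qed

lemma step_low:
  fixes a x :: real
  assumes "0 \<le> a" "a < 1/2" "0 \<le> x" "x \<le> 1/3"
  shows "0 \<le> f_a a x \<and> f_a a x \<le> (1+4*a)/3 * x"
proof -
  have h: "f_a a x = x * ((1-2*a)*x + 2*a)" using assms fa_low by simp
  have "(1-2*a)*x \<ge> 0" using assms by simp
  moreover have "(1-2*a)*x + 2*a \<le> (1+4*a)/3"
  proof -
    have "(1-2*a)*x \<le> (1-2*a)*(1/3)" using assms by (intro mult_left_mono) auto
    thus ?thesis by (simp add: field_simps)
  qed
  ultimately have "0 \<le> (1-2*a)*x + 2*a" "(1-2*a)*x + 2*a \<le> (1+4*a)/3" using assms by linarith+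
  hence "x * ((1-2*a)*x + 2*a) \<le> x * ((1+4*a)/3)" "0 \<le> x * ((1-2*a)*x + 2*a)"
    using assms by (intro mult_left_mono mult_nonneg_nonneg; simp)+
  thus ?thesis using h by (simp add: mult.commute)
qed

lemma step_high:
  fixes a x :: real
  assumes "1/2 < a" "a \<le> 1" "0 < x" "x \<le> 1/3"
  shows "f_a a x \<ge> (1+4*a)/3 * x \<and> f_a a x \<le> (4*a+1)/9"
proof -
  have h: "f_a a x = x * ((1-2*a)*x + 2*a)" using assms fa_low by simp
  have "(1-2*a)*x \<ge> (1-2*a)*(1/3)" using assms by (intro mult_left_mono_neg) auto
  hence "(1-2*a)*x + 2*a \<ge> (1+4*a)/3" by simp
  hence A: "f_a a x \<ge> (1+4*a)/3 * x" using h assms by (simp add: mult_left_mono mult.commute)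
  have "(1-2*a)*(1/3+x) \<ge> (1-2*a)*(2/3)" using assms by (intro mult_left_mono_neg) auto
  hence "(1-2*a)*(1/3+x) + 2*a \<ge> 0" using assms by simp
  hence "(1/3 - x) * ((1-2*a)*(1/3+x) + 2*a) \<ge> 0" using assms by simp
  moreover have "(4*a+1)/9 - f_a a x = (1/3 - x) * ((1-2*a)*(1/3+x) + 2*a)"
    unfolding h by (simp add: field_simps)
  ultimately show ?thesis using A by linarith
qed

theorem theorem2p1:
  fixes a :: real
  assumes "0 \<le> a" "a \<le> 1" "a \<noteq> 1/2"
  shows "{x \<in> {0..1}. f_a a x = x} = {0} \<union> {1/3<..1}
    \<and> (a < 1/2 \<longrightarrow> (\<forall>x0 \<in> {0..1/3}. (\<lambda>n. (f_a a ^^ n) x0) \<longlonglongrightarrow> 0))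
    \<and> (1/2 < a \<longrightarrow> (\<forall>x0 \<in> {0<..1/3}. \<exists>n::nat. \<exists>p \<in> {1/3<..(4*a+1)/9}.
           (f_a a ^^ n) x0 = p \<and> (f_a a ^^ (Suc n)) x0 = f_a a p \<and> f_a a p = p))"
proof (intro conjI impI ballI)
  show "{x \<in> {0..1}. f_a a x = x} = {0} \<union> {1/3<..1}" using part1 assms by simp
next
  fix x0 :: real assume lo: "a < 1/2" and x0: "x0 \<in> {0..1/3}"
  define q where "q = (1+4*a)/3"
  have q: "0 \<le> q" "q < 1" using lo assms unfolding q_def by auto
  have I: "0 \<le> (f_a a ^^ n) x0 \<and> (f_a a ^^ n) x0 \<le> q^n * x0" for n
  proof (induction n)
    case 0 then show ?case using x0 by simp
  next
    case (Suc n)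
    let ?y = "(f_a a ^^ n) x0"
    have "q^n * x0 \<le> 1 * (1/3)" using x0 q by (intro mult_mono) (auto simp: power_le_one)
    hence y: "0 \<le> ?y" "?y \<le> 1/3" using Suc by auto
    have s: "0 \<le> f_a a ?y" "f_a a ?y \<le> q * ?y" using step_low[OF assms(1) lo y] unfolding q_def by simp_all
    have "q * ?y \<le> q * (q^n*x0)" using Suc q by (intro mult_left_mono) auto
    thus ?case using s by simp
  qed
  have "(\<lambda>n. q^n * x0) \<longlonglongrightarrow> 0"
    using q by (intro tendsto_mult_left_zero LIMSEQ_power_zero) auto
  thus "(\<lambda>n. (f_a a ^^ n) x0) \<longlonglongrightarrow> 0"
    by (rule Lim_null_comparison[rotated]) (use I in auto)
next
  fix x0 :: real assume hi: "1/2 < a" and x0: "x0 \<in> {0<..1/3}"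
  define r where "r = (1+4*a)/3"
  have r: "1 < r" using hi unfolding r_def by auto
  have I: "(\<exists>m\<le>n. (f_a a ^^ m) x0 \<in> {1/3<..(4*a+1)/9}) \<or>
     (0 < (f_a a ^^ n) x0 \<and> (f_a a ^^ n) x0 \<le> 1/3 \<and> (f_a a ^^ n) x0 \<ge> r^n * x0)" for n
  proof (induction n)
    case 0 then show ?case using x0 by simp
  next
    case (Suc n)
    let ?y = "(f_a a ^^ n) x0"
    show ?case
    proof (cases "\<exists>m\<le>n. (f_a a ^^ m) x0 \<in> {1/3<..(4*a+1)/9}")
      case True then show ?thesis using le_SucI by blast
    next
      case False
      hence y: "0 < ?y" "?y \<le> 1/3" "?y \<ge> r^n * x0" using Suc by auto
      have s: "f_a a ?y \<ge> r * ?y" "f_a a ?y \<le> (4*a+1)/9"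
        using step_high[OF hi assms(2) y(1,2)] unfolding r_def by simp_all
      have "r * ?y \<ge> r * (r^n*x0)" using y r by (intro mult_left_mono) auto
      hence g: "f_a a ?y \<ge> r^(Suc n) * x0" using s by simp
      have pos: "f_a a ?y > 0" using s(1) y r by (smt (verit) mult_pos_pos)
      show ?thesis
      proof (cases "f_a a ?y \<le> 1/3")
        case True then show ?thesis using g pos by simp
      next
        case F: False
        have "(f_a a ^^ Suc n) x0 \<in> {1/3<..(4*a+1)/9}" using F s by simp
        then show ?thesis by blast
      qed
    qed
  qed
  obtain N where N: "1/(3*x0) < r^N" using real_arch_pow[OF r] by blast
  have "r^N * x0 > 1/3" using N x0 by (simp add: field_simps)
  hence "\<exists>m\<le>N. (f_a a ^^ m) x0 \<in> {1/3<..(4*a+1)/9}" using I[of N] by auto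
  then obtain m where m: "(f_a a ^^ m) x0 \<in> {1/3<..(4*a+1)/9}" by blast
  have fp: "f_a a ((f_a a ^^ m) x0) = (f_a a ^^ m) x0" using m fa_high by simp
  show "\<exists>n::nat. \<exists>p \<in> {1/3<..(4*a+1)/9}.
           (f_a a ^^ n) x0 = p \<and> (f_a a ^^ (Suc n)) x0 = f_a a p \<and> f_a a p = p"
    using m fp by (intro exI[of _ m] bexI[of _ "(f_a a ^^ m) x0"]) auto
qed

end
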